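(* Let $X$ be a Hausdorff topological space. Then $X$ is locally compact if and only if its symmetric pseudogroup $\mathscr{I}(X)$ is continuous.
   Context: The symmetric pseudogroup $\mathscr{I}(X)$ is the set of all homeomorphisms $f:U\to V$ between open subsets $U=\mathrm{dom}(f)$ and $V$ of $X$, with product: for $f:U\to V$ and $f_1:U_1\to V_1$, $f_1\cdot f : x\mapsto f_1(f(x))$ defined on $f^{-1}(V\cap U_1)$ with values in $f_1(V\cap U_1)$; it is an inverse semigroup with $f^*=f^{-1}$. Its intrinsic order is $f\leqslant g$ iff $f=g|_U$ for some open $U\subseteq\mathrm{dom}(g)$. In a poset, $x$ is way-below $y$ ($x\ll y$) if for every directed subset $D$ (nonempty, any two elements having an upper bound in $D$) that has a supremum with $y\leqslant\sup D$, there is $d\in D$ with $x\leqslant d$. A poset is continuous if for every $s$ the set $\{t: t\ll s\}$ is directed with supremum $s$; $\mathscr{I}(X)$ is continuous if it is so for its intrinsic order. *)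

theory Defs
  imports "HOL-Analysis.Analysis"
begin

definition sym_pseudogroup :: "'a topology \<Rightarrow> ('a \<rightharpoonup> 'a) set" where
  "sym_pseudogroup X = {f. openin X (dom f) \<and> openin X (ran f) \<and>
     homeomorphic_map (subtopology X (dom f)) (subtopology X (ran f)) (\<lambda>x. the (f x))}"

definition sym_pg_mult :: "('a \<rightharpoonup> 'a) \<Rightarrow> ('a \<rightharpoonup> 'a) \<Rightarrow> ('a \<rightharpoonup> 'a)" where
  "sym_pg_mult f1 f = f1 \<circ>\<^sub>m f"

definition sym_pg_le :: "'a topology \<Rightarrow> ('a \<rightharpoonup> 'a) \<Rightarrow> ('a \<rightharpoonup> 'a) \<Rightarrow> bool" where
  "sym_pg_le X f g \<longleftrightarrow> (\<exists>U. openin X U \<and> U \<subseteq> dom g \<and> f = g |` U)"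

definition directed_in :: "('b \<Rightarrow> 'b \<Rightarrow> bool) \<Rightarrow> 'b set \<Rightarrow> 'b set \<Rightarrow> bool" where
  "directed_in le P D \<longleftrightarrow> D \<subseteq> P \<and> D \<noteq> {} \<and>
     (\<forall>x\<in>D. \<forall>y\<in>D. \<exists>z\<in>D. le x z \<and> le y z)"

definition is_sup_in :: "('b \<Rightarrow> 'b \<Rightarrow> bool) \<Rightarrow> 'b set \<Rightarrow> 'b set \<Rightarrow> 'b \<Rightarrow> bool" where
  "is_sup_in le P D s \<longleftrightarrow> s \<in> P \<and> (\<forall>d\<in>D. le d s) \<and>
     (\<forall>u\<in>P. (\<forall>d\<in>D. le d u) \<longrightarrow> le s u)"

definition way_below :: "('b \<Rightarrow> 'b \<Rightarrow> bool) \<Rightarrow> 'b set \<Rightarrow> 'b \<Rightarrow> 'b \<Rightarrow> bool" where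
  "way_below le P x y \<longleftrightarrow>
     (\<forall>D s. directed_in le P D \<longrightarrow> is_sup_in le P D s \<longrightarrow> le y s \<longrightarrow> (\<exists>d\<in>D. le x d))"

definition continuous_poset :: "('b \<Rightarrow> 'b \<Rightarrow> bool) \<Rightarrow> 'b set \<Rightarrow> bool" where
  "continuous_poset le P \<longleftrightarrow>
     (\<forall>s\<in>P. directed_in le P {t\<in>P. way_below le P t s} \<and>
             is_sup_in le P {t\<in>P. way_below le P t s} s)"

end

theory Submission
  imports Defs
begin

lemma le_trans_pg: "sym_pg_le X f g \<Longrightarrow> sym_pg_le X g h \<Longrightarrow> sym_pg_le X f h"
  unfolding sym_pg_le_def
proof (elim exE conjE)
  fix U V assume U: "openin X U" "U \<subseteq> dom g" "f = g |` U" and V: "openin X V" "V \<subseteq> dom h" "g = h |` V"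
  have "U \<subseteq> V" using U V by auto
  then have "f = h |` U" using U V by (auto simp: restrict_map_def fun_eq_iff)
  moreover have "U \<subseteq> dom h" using U V by auto
  ultimately show "\<exists>U. openin X U \<and> U \<subseteq> dom h \<and> f = h |` U" using U by blast
qed

lemma le_dom: "sym_pg_le X f g \<Longrightarrow> dom f \<subseteq> dom g"
  unfolding sym_pg_le_def by (auto simp: restrict_map_def split: if_splits)

lemma le_eq: "sym_pg_le X f g \<Longrightarrow> x \<in> dom f \<Longrightarrow> f x = g x"
  unfolding sym_pg_le_def by (auto simp: restrict_map_def split: if_splits)

lemma le_refl: "f \<in> sym_pseudogroup X \<Longrightarrow> sym_pg_le X f f"
  unfolding sym_pg_le_def sym_pseudogroup_def by (intro exI[of _ "dom f"]) (auto simp: restrict_map_def fun_eq_iff domIff)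

lemma le_restrict: "openin X U \<Longrightarrow> U \<subseteq> dom g \<Longrightarrow> sym_pg_le X (g |` U) g"
  unfolding sym_pg_le_def by blast

lemma le_intro: "openin X (dom f) \<Longrightarrow> dom f \<subseteq> dom g \<Longrightarrow> (\<And>x. x \<in> dom f \<Longrightarrow> f x = g x) \<Longrightarrow> sym_pg_le X f g"
  unfolding sym_pg_le_def
  apply (rule exI[of _ "dom f"])
  by (auto simp: restrict_map_def fun_eq_iff domIff)

lemma P_open_dom: "f \<in> sym_pseudogroup X \<Longrightarrow> openin X (dom f)"
  unfolding sym_pseudogroup_def by auto

lemma ran_eq: "ran f = (\<lambda>x. the (f x)) ` dom f"
  by (force simp: ran_def dom_def)

lemma restrict_P:
  assumes f: "f \<in> sym_pseudogroup X" and V: "openin X V"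
  shows "f |` V \<in> sym_pseudogroup X"
proof -
  let ?g = "\<lambda>x. the (f x)"
  have o1: "openin X (dom f)" and o2: "openin X (ran f)"
   and h: "homeomorphic_map (subtopology X (dom f)) (subtopology X (ran f)) ?g"
    using f unfolding sym_pseudogroup_def by auto
  have td: "topspace (subtopology X (dom f)) = dom f"
    using o1 openin_subset by fastforce
  have tr: "topspace (subtopology X (ran f)) = ran f"
    using o2 openin_subset by fastforce
  have d: "dom (f |` V) = dom f \<inter> V" by auto
  have r: "ran (f |` V) = ?g ` (dom f \<inter> V)"
    unfolding ran_eq d by (auto simp: restrict_map_def)
  have od: "openin X (dom f \<inter> V)" using o1 V by blast
  have "openin (subtopology X (dom f)) (dom f \<inter> V)"
    by (simp add: V openin_subtopology_Int2)
  then have "openin (subtopology X (ran f)) (?g ` (dom f \<inter> V))"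
    using homeomorphic_imp_open_map[OF h] unfolding open_map_def by blast
  then have orr: "openin X (ran (f |` V))" using r o2 openin_trans_full by metis
  have "homeomorphic_map (subtopology (subtopology X (dom f)) (dom f \<inter> V))
          (subtopology (subtopology X (ran f)) (?g ` (dom f \<inter> V))) ?g"
    apply (rule homeomorphic_map_subtopologies[OF h])
    using td tr by (auto intro: ranI)
  then have "homeomorphic_map (subtopology X (dom f \<inter> V)) (subtopology X (ran (f |` V))) ?g"
    unfolding subtopology_subtopology r
    by (metis Int_absorb1 Int_lower1 image_mono ran_eq)
  then have "homeomorphic_map (subtopology X (dom (f |` V))) (subtopology X (ran (f |` V))) (\<lambda>x. the ((f |` V) x))"
    unfolding d apply (rule homeomorphic_map_eq)
    using od openin_subset by (fastforce simp: d)
  then show ?thesis unfolding sym_pseudogroup_def using d od orr by auto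
qed

lemma id_P: "openin X A \<Longrightarrow> Some |` A \<in> sym_pseudogroup X"
proof -
  assume A: "openin X A"
  have d: "dom (Some |` A) = A" by auto
  have r: "ran (Some |` A) = A" by (auto simp: ran_def restrict_map_def)
  have "homeomorphic_map (subtopology X A) (subtopology X A) id" by simp
  then have "homeomorphic_map (subtopology X A) (subtopology X A) (\<lambda>x. the ((Some |` A) x))"
    by (rule homeomorphic_map_eq) (use A openin_subset in auto)
  then show ?thesis unfolding sym_pseudogroup_def using A d r by simp
qed

lemma wb_le:
  assumes "s \<in> sym_pseudogroup X" "way_below (sym_pg_le X) (sym_pseudogroup X) t s"
  shows "sym_pg_le X t s"
proof -
  have "directed_in (sym_pg_le X) (sym_pseudogroup X) {s}"
    using assms(1) le_refl unfolding directed_in_def by fastforce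
  moreover have "is_sup_in (sym_pg_le X) (sym_pseudogroup X) {s} s"
    using assms(1) le_refl unfolding is_sup_in_def by fastforce
  ultimately show ?thesis using assms(2) le_refl[OF assms(1)] unfolding way_below_def by blast
qed

lemma sup_dom:
  assumes D: "directed_in (sym_pg_le X) (sym_pseudogroup X) D"
    and s: "is_sup_in (sym_pg_le X) (sym_pseudogroup X) D s"
  shows "dom s \<subseteq> \<Union>(dom ` D)"
proof -
  let ?V = "\<Union>(dom ` D)"
  have sP: "s \<in> sym_pseudogroup X" using s by (simp add: is_sup_in_def)
  have ub: "\<And>d. d \<in> D \<Longrightarrow> sym_pg_le X d s" using s by (simp add: is_sup_in_def)
  have least: "\<And>u. u \<in> sym_pseudogroup X \<Longrightarrow> (\<forall>d\<in>D. sym_pg_le X d u) \<Longrightarrow> sym_pg_le X s u"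
    using s by (simp add: is_sup_in_def)
  have DP: "D \<subseteq> sym_pseudogroup X" using D by (simp add: directed_in_def)
  have oV: "openin X ?V"
  proof (rule openin_Union)
    fix S assume "S \<in> dom ` D"
    then obtain d where d: "d \<in> D" "S = dom d" by blast
    have "d \<in> sym_pseudogroup X" using DP d(1) by (rule subsetD)
    then show "openin X S" unfolding d(2) by (rule P_open_dom)
  qed
  have rP: "s |` ?V \<in> sym_pseudogroup X" by (rule restrict_P[OF sP oV])
  have "\<forall>d\<in>D. sym_pg_le X d (s |` ?V)"
  proof
    fix d assume d: "d \<in> D"
    have ds: "dom d \<subseteq> dom s" using le_dom[OF ub[OF d]] .
    have dP: "d \<in> sym_pseudogroup X" using DP d by (rule subsetD)
    show "sym_pg_le X d (s |` ?V)"
    proof (rule le_intro)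
      show "openin X (dom d)" using dP by (rule P_open_dom)
      show "dom d \<subseteq> dom (s |` ?V)"
      proof
        fix x assume x: "x \<in> dom d"
        have "x \<in> ?V" using x d by blast
        moreover have "x \<in> dom s" using x ds by blast
        ultimately show "x \<in> dom (s |` ?V)" by simp
      qed
      fix x assume x: "x \<in> dom d"
      have "x \<in> ?V" using x d by blast
      then show "d x = (s |` ?V) x" using le_eq[OF ub[OF d] x] by simp
    qed
  qed
  then have "sym_pg_le X s (s |` ?V)" using least rP by simp
  then have "dom s \<subseteq> dom (s |` ?V)" by (rule le_dom)
  then show ?thesis by simp
qed

lemma directed_finite:
  assumes D: "directed_in le P D" and tr: "\<And>a b c. le a b \<Longrightarrow> le b c \<Longrightarrow> le a c"
  shows "finite F \<Longrightarrow> F \<subseteq> D \<Longrightarrow> \<exists>d\<in>D. \<forall>f\<in>F. le f d"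
proof (induction F rule: finite_induct)
  case empty
  have "D \<noteq> {}" using D by (simp add: directed_in_def)
  then show ?case by blast
next
  case (insert x F)
  then obtain d where d: "d \<in> D" "\<forall>f\<in>F. le f d" by auto
  have xD: "x \<in> D" using insert.prems by simp
  have "\<forall>x\<in>D. \<forall>y\<in>D. \<exists>z\<in>D. le x z \<and> le y z" using D by (simp add: directed_in_def)
  then obtain z where z: "z \<in> D" "le x z" "le d z" using xD d(1) by blast
  have "\<forall>f\<in>insert x F. le f z"
  proof
    fix f assume "f \<in> insert x F"
    then show "le f z"
    proof
      assume "f = x" then show ?thesis using z(2) by simp
    next
      assume "f \<in> F" then have "le f d" using d(2) by blast
      then show ?thesis using z(3) by (rule tr)
    qed
  qed
  then show ?case using z(1) by blast
qed

lemma Q_wb: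
  assumes sP: "s \<in> sym_pseudogroup X" and V: "openin X V" and K: "compactin X K"
    and VK: "V \<subseteq> K" and Ks: "K \<subseteq> dom s"
  shows "way_below (sym_pg_le X) (sym_pseudogroup X) (s |` V) s"
  unfolding way_below_def
proof (intro allI impI)
  fix D s' assume D: "directed_in (sym_pg_le X) (sym_pseudogroup X) D"
    and s': "is_sup_in (sym_pg_le X) (sym_pseudogroup X) D s'" and ss': "sym_pg_le X s s'"
  have DP: "D \<subseteq> sym_pseudogroup X" using D by (simp add: directed_in_def)
  have "K \<subseteq> dom s'" using Ks le_dom[OF ss'] by (rule subset_trans)
  then have KD: "K \<subseteq> \<Union>(dom ` D)" using sup_dom[OF D s'] by (rule subset_trans)
  have opD: "\<forall>U\<in>dom ` D. openin X U"
  proof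
    fix U assume "U \<in> dom ` D"
    then obtain d where d: "d \<in> D" "U = dom d" by blast
    have "d \<in> sym_pseudogroup X" using DP d(1) by (rule subsetD)
    then show "openin X U" unfolding d(2) by (rule P_open_dom)
  qed
  have "\<forall>\<U>. (\<forall>U\<in>\<U>. openin X U) \<and> K \<subseteq> \<Union>\<U> \<longrightarrow> (\<exists>\<F>. finite \<F> \<and> \<F> \<subseteq> \<U> \<and> K \<subseteq> \<Union>\<F>)"
    using K by (simp add: compactin_def)
  then have "\<exists>\<F>. finite \<F> \<and> \<F> \<subseteq> dom ` D \<and> K \<subseteq> \<Union>\<F>" using opD KD by blast
  then obtain F where F: "finite F" "F \<subseteq> dom ` D" "K \<subseteq> \<Union>F" by blast
  then obtain G where G: "G \<subseteq> D" "finite G" "F = dom ` G"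
    by (meson finite_subset_image)
  have "\<exists>d\<in>D. \<forall>f\<in>G. sym_pg_le X f d"
    apply (rule directed_finite[OF D])
    apply (erule (1) le_trans_pg)
    using G by auto
  then obtain d0 where d0: "d0 \<in> D" "\<forall>f\<in>G. sym_pg_le X f d0" by blast
  have Kd0: "K \<subseteq> dom d0"
  proof
    fix x assume "x \<in> K"
    then have "x \<in> \<Union>(dom ` G)" using F(3) unfolding G(3) by blast
    then obtain g where g: "g \<in> G" "x \<in> dom g" by blast
    have "sym_pg_le X g d0" using d0(2) g(1) by blast
    then have "dom g \<subseteq> dom d0" by (rule le_dom)
    then show "x \<in> dom d0" using g(2) by blast
  qed
  have ub: "sym_pg_le X d0 s'" using s' d0(1) by (simp add: is_sup_in_def)
  have "s |` V = d0 |` V"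
  proof
    fix x show "(s |` V) x = (d0 |` V) x"
    proof (cases "x \<in> V")
      case True
      have xs: "x \<in> dom s" using True VK Ks by blast
      have xd: "x \<in> dom d0" using True VK Kd0 by blast
      have "s x = s' x" by (rule le_eq[OF ss' xs])
      moreover have "d0 x = s' x" by (rule le_eq[OF ub xd])
      ultimately show ?thesis using True by simp
    qed simp
  qed
  moreover have "V \<subseteq> dom d0" using VK Kd0 by (rule subset_trans)
  ultimately have "sym_pg_le X (s |` V) d0" using V unfolding sym_pg_le_def by blast
  then show "\<exists>d\<in>D. sym_pg_le X (s |` V) d" using d0(1) by blast
qed

lemma LC_nbhd:
  assumes H: "Hausdorff_space X" and L: "locally_compact_space X" and S: "openin X S" and x: "x \<in> S"
  shows "\<exists>V K. openin X V \<and> compactin X K \<and> x \<in> V \<and> V \<subseteq> K \<and> K \<subseteq> S"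
proof -
  have L2: "locally_compact_space (subtopology X S)"
    by (rule locally_compact_space_open_subset) (use H L S in auto)
  have "S \<subseteq> topspace X" by (rule openin_subset[OF S])
  then have xt: "x \<in> topspace (subtopology X S)" using x by (auto simp: topspace_subtopology)
  obtain U K where UK: "openin (subtopology X S) U" "compactin (subtopology X S) K" "x \<in> U" "U \<subseteq> K"
    using L2 xt unfolding locally_compact_space_def by meson
  have "openin X U" by (rule openin_trans_full[OF UK(1) S])
  moreover have "compactin X K" "K \<subseteq> S" using UK(2) by (simp_all add: compactin_subtopology)
  ultimately show ?thesis using UK(3,4) by blast
qed

definition Qs :: "'a topology \<Rightarrow> ('a \<rightharpoonup> 'a) \<Rightarrow> ('a \<rightharpoonup> 'a) set" where
  "Qs X s = {s |` V | V. openin X V \<and> (\<exists>K. compactin X K \<and> V \<subseteq> K \<and> K \<subseteq> dom s)}"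

lemma Qs_directed:
  assumes sP: "s \<in> sym_pseudogroup X"
  shows "directed_in (sym_pg_le X) (sym_pseudogroup X) (Qs X s)"
  unfolding directed_in_def
proof (intro conjI ballI)
  show "Qs X s \<subseteq> sym_pseudogroup X"
  proof
    fix q assume "q \<in> Qs X s"
    then obtain V where "q = s |` V" "openin X V" unfolding Qs_def by blast
    then show "q \<in> sym_pseudogroup X" using restrict_P[OF sP] by simp
  qed
  have "openin X {}" "{} \<subseteq> ({}::'a set)" "{} \<subseteq> dom s" "compactin X {}" by auto
  then have "s |` {} \<in> Qs X s" unfolding Qs_def by blast
  then show "Qs X s \<noteq> {}" by blast
  fix a b assume a: "a \<in> Qs X s" and b: "b \<in> Qs X s"
  obtain V1 K1 where 1: "a = s |` V1" "openin X V1" "compactin X K1" "V1 \<subseteq> K1" "K1 \<subseteq> dom s"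
    using a unfolding Qs_def by blast
  obtain V2 K2 where 2: "b = s |` V2" "openin X V2" "compactin X K2" "V2 \<subseteq> K2" "K2 \<subseteq> dom s"
    using b unfolding Qs_def by blast
  have k: "compactin X (K1 \<union> K2)" using 1 2 compactin_Un by blast
  have v: "openin X (V1 \<union> V2)" "V1 \<union> V2 \<subseteq> K1 \<union> K2" "K1 \<union> K2 \<subseteq> dom s" using 1 2 by auto
  have c: "s |` (V1 \<union> V2) \<in> Qs X s" unfolding Qs_def using k v by blast
  have e1: "a = (s |` (V1 \<union> V2)) |` V1" using 1 by (simp add: restrict_map_def fun_eq_iff)
  have e2: "b = (s |` (V1 \<union> V2)) |` V2" using 2 by (simp add: restrict_map_def fun_eq_iff)
  have d1: "V1 \<subseteq> dom (s |` (V1 \<union> V2))" using 1 by auto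
  have d2: "V2 \<subseteq> dom (s |` (V1 \<union> V2))" using 2 by auto
  have "sym_pg_le X a (s |` (V1 \<union> V2))"
    unfolding sym_pg_le_def using 1(2) d1 e1 by blast
  moreover have "sym_pg_le X b (s |` (V1 \<union> V2))"
    unfolding sym_pg_le_def using 2(2) d2 e2 by blast
  ultimately show "\<exists>z\<in>Qs X s. sym_pg_le X a z \<and> sym_pg_le X b z" using c by blast
qed

lemma Qs_sup:
  assumes H: "Hausdorff_space X" and L: "locally_compact_space X" and sP: "s \<in> sym_pseudogroup X"
  shows "is_sup_in (sym_pg_le X) (sym_pseudogroup X) (Qs X s) s"
  unfolding is_sup_in_def
proof (intro conjI ballI impI)
  show "s \<in> sym_pseudogroup X" by fact
  fix d assume "d \<in> Qs X s"
  then obtain V K where 1: "d = s |` V" "openin X V" "compactin X K" "V \<subseteq> K" "K \<subseteq> dom s"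
    unfolding Qs_def by blast
  then show "sym_pg_le X d s" using le_restrict by blast
next
  fix u assume uP: "u \<in> sym_pseudogroup X" and ub: "\<forall>d\<in>Qs X s. sym_pg_le X d u"
  have key: "x \<in> dom u \<and> s x = u x" if x: "x \<in> dom s" for x
  proof -
    obtain V K where VK: "openin X V" "compactin X K" "x \<in> V" "V \<subseteq> K" "K \<subseteq> dom s"
      using LC_nbhd[OF H L P_open_dom[OF sP] x] by blast
    have "s |` V \<in> Qs X s" unfolding Qs_def using VK by blast
    then have le: "sym_pg_le X (s |` V) u" using ub by blast
    have xd: "x \<in> dom (s |` V)" using VK x by auto
    show ?thesis using le_dom[OF le] le_eq[OF le xd] xd VK(3) by auto
  qed
  show "sym_pg_le X s u"
    apply (rule le_intro)
    using P_open_dom[OF sP] key by auto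
qed

lemma Qs_wb:
  assumes sP: "s \<in> sym_pseudogroup X" and q: "q \<in> Qs X s"
  shows "way_below (sym_pg_le X) (sym_pseudogroup X) q s"
  using q Q_wb[OF sP] unfolding Qs_def by blast

lemma forward:
  assumes H: "Hausdorff_space X" and L: "locally_compact_space X" and sP: "s \<in> sym_pseudogroup X"
  shows "directed_in (sym_pg_le X) (sym_pseudogroup X) {t\<in>sym_pseudogroup X. way_below (sym_pg_le X) (sym_pseudogroup X) t s} \<and>
         is_sup_in (sym_pg_le X) (sym_pseudogroup X) {t\<in>sym_pseudogroup X. way_below (sym_pg_le X) (sym_pseudogroup X) t s} s"
proof -
  let ?W = "{t\<in>sym_pseudogroup X. way_below (sym_pg_le X) (sym_pseudogroup X) t s}"
  have QD: "directed_in (sym_pg_le X) (sym_pseudogroup X) (Qs X s)" by (rule Qs_directed[OF sP])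
  have QS: "is_sup_in (sym_pg_le X) (sym_pseudogroup X) (Qs X s) s" by (rule Qs_sup[OF H L sP])
  have QP: "Qs X s \<subseteq> sym_pseudogroup X" using QD unfolding directed_in_def by auto
  have QW: "Qs X s \<subseteq> ?W" using Qs_wb[OF sP] QP by auto
  have WQ: "\<exists>q\<in>Qs X s. sym_pg_le X t q" if "t \<in> ?W" for t
  proof -
    have "\<forall>D s'. directed_in (sym_pg_le X) (sym_pseudogroup X) D \<longrightarrow> is_sup_in (sym_pg_le X) (sym_pseudogroup X) D s' \<longrightarrow> sym_pg_le X s s' \<longrightarrow> (\<exists>d\<in>D. sym_pg_le X t d)"
      using that unfolding way_below_def by simp
    then show ?thesis using QD QS le_refl[OF sP] by simp
  qed
  have "directed_in (sym_pg_le X) (sym_pseudogroup X) ?W"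
    unfolding directed_in_def
  proof (intro conjI ballI)
    show "?W \<subseteq> sym_pseudogroup X" by blast
    show "?W \<noteq> {}" using QW QD unfolding directed_in_def by blast
    fix a b assume a: "a \<in> ?W" and b: "b \<in> ?W"
    obtain qa where qa: "qa \<in> Qs X s" "sym_pg_le X a qa" using WQ[OF a] by blast
    obtain qb where qb: "qb \<in> Qs X s" "sym_pg_le X b qb" using WQ[OF b] by blast
    obtain z where z: "z \<in> Qs X s" "sym_pg_le X qa z" "sym_pg_le X qb z"
      using QD qa qb unfolding directed_in_def by meson
    have "sym_pg_le X a z" using le_trans_pg[OF qa(2) z(2)] .
    moreover have "sym_pg_le X b z" using le_trans_pg[OF qb(2) z(3)] .
    ultimately show "\<exists>z\<in>?W. sym_pg_le X a z \<and> sym_pg_le X b z" using z QW by blast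
  qed
  moreover have "is_sup_in (sym_pg_le X) (sym_pseudogroup X) ?W s"
    unfolding is_sup_in_def
  proof (intro conjI ballI impI)
    show "s \<in> sym_pseudogroup X" by fact
    fix d assume "d \<in> ?W" then show "sym_pg_le X d s" using wb_le[OF sP] by blast
  next
    fix u assume "u \<in> sym_pseudogroup X" "\<forall>d\<in>?W. sym_pg_le X d u"
    then have "\<forall>d\<in>Qs X s. sym_pg_le X d u" using QW by blast
    then show "sym_pg_le X s u" using QS \<open>u \<in> sym_pseudogroup X\<close> unfolding is_sup_in_def by simp
  qed
  ultimately show ?thesis by blast
qed

lemma cont_dom:
  assumes C: "continuous_poset (sym_pg_le X) (sym_pseudogroup X)" and sP: "s \<in> sym_pseudogroup X"
    and x: "x \<in> dom s"
  shows "\<exists>t\<in>sym_pseudogroup X. way_below (sym_pg_le X) (sym_pseudogroup X) t s \<and> x \<in> dom t"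
proof -
  let ?W = "{t\<in>sym_pseudogroup X. way_below (sym_pg_le X) (sym_pseudogroup X) t s}"
  have "directed_in (sym_pg_le X) (sym_pseudogroup X) ?W" "is_sup_in (sym_pg_le X) (sym_pseudogroup X) ?W s"
    using C sP unfolding continuous_poset_def by auto
  from sup_dom[OF this] x show ?thesis by blast
qed

lemma compact_like:
  assumes A: "openin X A" and t: "way_below (sym_pg_le X) (sym_pseudogroup X) t (Some |` A)"
    and O: "\<forall>B\<in>\<O>. openin X B" and AO: "A \<subseteq> \<Union>\<O>"
  shows "\<exists>F. finite F \<and> F \<subseteq> \<O> \<and> dom t \<subseteq> \<Union>F"
proof -
  let ?D = "(\<lambda>F. Some |` \<Union>F) ` {F. finite F \<and> F \<subseteq> \<O>}"
  let ?s = "Some |` \<Union>\<O>"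
  have oU: "openin X (\<Union>\<O>)" using O by blast
  have sP: "?s \<in> sym_pseudogroup X" using id_P[OF oU] .
  have leF: "sym_pg_le X (Some |` \<Union>F) (Some |` \<Union>G)" if "F \<subseteq> G" "G \<subseteq> \<O>" for F G
    unfolding sym_pg_le_def using that O
    by (intro exI[of _ "\<Union>F"]) (auto simp: restrict_map_def fun_eq_iff; blast)
  have D: "directed_in (sym_pg_le X) (sym_pseudogroup X) ?D"
    unfolding directed_in_def
  proof (intro conjI ballI)
    show "?D \<subseteq> sym_pseudogroup X" using id_P O by blast
    show "?D \<noteq> {}" by blast
    fix a b assume "a \<in> ?D" "b \<in> ?D"
    then obtain F G where FG: "finite F" "F \<subseteq> \<O>" "a = Some |` \<Union>F" "finite G" "G \<subseteq> \<O>" "b = Some |` \<Union>G"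
      by blast
    have "Some |` \<Union>(F \<union> G) \<in> ?D" using FG by blast
    moreover have "sym_pg_le X a (Some |` \<Union>(F \<union> G))" "sym_pg_le X b (Some |` \<Union>(F \<union> G))"
      using leF[of F "F \<union> G"] leF[of G "F \<union> G"] FG by auto
    ultimately show "\<exists>z\<in>?D. sym_pg_le X a z \<and> sym_pg_le X b z" by blast
  qed
  have S: "is_sup_in (sym_pg_le X) (sym_pseudogroup X) ?D ?s"
    unfolding is_sup_in_def
  proof (intro conjI ballI impI)
    show "?s \<in> sym_pseudogroup X" by fact
    fix d assume "d \<in> ?D"
    then obtain F where "finite F" "F \<subseteq> \<O>" "d = Some |` \<Union>F" by blast
    then show "sym_pg_le X d ?s" using leF[of F \<O>] by simp
  next
    fix u assume uP: "u \<in> sym_pseudogroup X" and ub: "\<forall>d\<in>?D. sym_pg_le X d u"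
    have key: "x \<in> dom u \<and> ?s x = u x" if x: "x \<in> dom ?s" for x
    proof -
      obtain B' where B': "B' \<in> \<O>" "x \<in> B'" using x by auto
      have "Some |` B' \<in> ?D" by (rule image_eqI[of _ _ "{B'}"]) (use B' in auto)
      then have le: "sym_pg_le X (Some |` B') u" using ub by blast
      have xd: "x \<in> dom (Some |` B')" using B' by auto
      show ?thesis using le_dom[OF le] le_eq[OF le xd] xd B' by (auto simp: restrict_map_def)
    qed
    show "sym_pg_le X ?s u"
      apply (rule le_intro)
      using P_open_dom[OF sP] key by auto
  qed
  have "sym_pg_le X (Some |` A) ?s"
    unfolding sym_pg_le_def using A AO
    by (intro exI[of _ A]) (auto simp: restrict_map_def fun_eq_iff; blast)
  moreover have "\<forall>D s. directed_in (sym_pg_le X) (sym_pseudogroup X) D \<longrightarrow> is_sup_in (sym_pg_le X) (sym_pseudogroup X) D s \<longrightarrow> sym_pg_le X (Some |` A) s \<longrightarrow> (\<exists>d\<in>D. sym_pg_le X t d)"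
    using t unfolding way_below_def .
  ultimately obtain d where "d \<in> ?D" "sym_pg_le X t d" using D S by blast
  then obtain F where F: "finite F" "F \<subseteq> \<O>" "sym_pg_le X t (Some |` \<Union>F)" by blast
  have "dom t \<subseteq> dom (Some |` \<Union>F)" by (rule le_dom[OF F(3)])
  then show ?thesis using F(1,2) by auto
qed

lemma le_id: "sym_pg_le X t (Some |` A) \<Longrightarrow> t = Some |` dom t"
  unfolding sym_pg_le_def by (auto simp: restrict_map_def fun_eq_iff split: if_splits)

lemma backward:
  assumes H: "Hausdorff_space X" and C: "continuous_poset (sym_pg_le X) (sym_pseudogroup X)"
  shows "locally_compact_space X"
  unfolding locally_compact_space_def
proof
  fix x assume x: "x \<in> topspace X"
  let ?s0 = "Some |` topspace X"
  have s0P: "?s0 \<in> sym_pseudogroup X" by (rule id_P) simp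
  have "x \<in> dom ?s0" using x by simp
  then obtain t where t: "t \<in> sym_pseudogroup X" "way_below (sym_pg_le X) (sym_pseudogroup X) t ?s0" "x \<in> dom t"
    using cont_dom[OF C s0P] by blast
  define V where "V = dom t"
  have oV: "openin X V" unfolding V_def by (rule P_open_dom[OF t(1)])
  have iVP: "Some |` V \<in> sym_pseudogroup X" by (rule id_P[OF oV])
  have "x \<in> dom (Some |` V)" using t(3) unfolding V_def by simp
  then obtain t' where t': "t' \<in> sym_pseudogroup X" "way_below (sym_pg_le X) (sym_pseudogroup X) t' (Some |` V)" "x \<in> dom t'"
    using cont_dom[OF C iVP] by blast
  define U where "U = dom t'"
  have oU: "openin X U" unfolding U_def by (rule P_open_dom[OF t'(1)])
  have clV: "X closure_of U \<subseteq> V"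
  proof
    fix y assume y: "y \<in> X closure_of U"
    show "y \<in> V"
    proof (rule ccontr)
      assume yV: "y \<notin> V"
      define Os where "Os = {B. openin X B \<and> y \<notin> X closure_of B}"
      have yt: "y \<in> topspace X" using closure_of_subset_topspace[of X U] y by (rule subsetD)
      have VO: "V \<subseteq> \<Union>Os"
      proof
        fix z assume z: "z \<in> V"
        have zt: "z \<in> topspace X" using openin_subset[OF oV] z by (rule subsetD)
        have "z \<noteq> y" using z yV by blast
        then have "\<exists>B N. openin X B \<and> openin X N \<and> z \<in> B \<and> y \<in> N \<and> disjnt B N"
          using H zt yt unfolding Hausdorff_space_def by blast
        then obtain B N where ON: "openin X B" "openin X N" "z \<in> B" "y \<in> N" "disjnt B N"
          by blast
        have "y \<notin> X closure_of B"
        proof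
          assume "y \<in> X closure_of B"
          then have "\<forall>T. y \<in> T \<and> openin X T \<longrightarrow> (\<exists>w. w \<in> B \<and> w \<in> T)"
            by (simp add: in_closure_of)
          then obtain w where "w \<in> B" "w \<in> N" using ON(2,4) by blast
          then show False using ON(5) by (simp add: disjnt_def disjoint_iff)
        qed
        then have "B \<in> Os" unfolding Os_def using ON(1) by simp
        then show "z \<in> \<Union>Os" using ON(3) by blast
      qed
      have "\<forall>B\<in>Os. openin X B" unfolding Os_def by simp
      then obtain F where F: "finite F" "F \<subseteq> Os" "dom t' \<subseteq> \<Union>F"
        using compact_like[OF oV t'(2) _ VO] by blast
      have "U \<subseteq> \<Union>F" using F(3) unfolding U_def .
      then have "y \<in> X closure_of (\<Union>F)" using closure_of_mono y by blast
      then have "y \<in> (\<Union>S\<in>F. X closure_of S)" using closure_of_Union[OF F(1)] by simp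
      then obtain S where "S \<in> F" "y \<in> X closure_of S" by blast
      moreover have "S \<in> Os" using F(2) \<open>S \<in> F\<close> by blast
      ultimately show False unfolding Os_def by simp
    qed
  qed
  have cK: "compactin X (X closure_of U)"
    unfolding compactin_def
  proof (intro conjI allI impI)
    show "X closure_of U \<subseteq> topspace X" by (rule closure_of_subset_topspace)
    fix \<U> assume U: "(\<forall>U\<in>\<U>. openin X U) \<and> X closure_of U \<subseteq> \<Union>\<U>"
    define Os where "Os = insert (topspace X - X closure_of U) \<U>"
    have oc: "openin X (topspace X - X closure_of U)" by (simp add: openin_diff)
    have "\<forall>B\<in>Os. openin X B" unfolding Os_def using U oc by simp
    moreover have "topspace X \<subseteq> \<Union>Os"
    proof
      fix z assume "z \<in> topspace X"
      then show "z \<in> \<Union>Os"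
      proof (cases "z \<in> X closure_of U")
        case True then show ?thesis using U unfolding Os_def by blast
      next
        case False then show ?thesis using \<open>z \<in> topspace X\<close> unfolding Os_def by blast
      qed
    qed
    ultimately have "\<exists>F. finite F \<and> F \<subseteq> Os \<and> dom t \<subseteq> \<Union>F"
      by (rule compact_like[OF openin_topspace t(2)])
    then obtain F where F: "finite F" "F \<subseteq> Os" "dom t \<subseteq> \<Union>F" by blast
    have "X closure_of U \<subseteq> \<Union>(F - {topspace X - X closure_of U})"
    proof
      fix z assume z: "z \<in> X closure_of U"
      then have "z \<in> dom t" using clV unfolding V_def by blast
      then have "z \<in> \<Union>F" by (rule subsetD[OF F(3)])
      then obtain B where B: "B \<in> F" "z \<in> B" by blast
      have "B \<noteq> topspace X - X closure_of U"
      proof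
        assume "B = topspace X - X closure_of U"
        then show False using z B(2) by simp
      qed
      then show "z \<in> \<Union>(F - {topspace X - X closure_of U})" using B by blast
    qed
    moreover have "F - {topspace X - X closure_of U} \<subseteq> \<U>" using F(2) unfolding Os_def by blast
    moreover have "finite (F - {topspace X - X closure_of U})" using F(1) by simp
    ultimately show "\<exists>\<F>. finite \<F> \<and> \<F> \<subseteq> \<U> \<and> X closure_of U \<subseteq> \<Union>\<F>"
      by blast
  qed
  have "U \<subseteq> X closure_of U" using closure_of_subset[OF openin_subset[OF oU]] .
  moreover have "x \<in> U" using t'(3) unfolding U_def .
  ultimately show "\<exists>U K. openin X U \<and> compactin X K \<and> x \<in> U \<and> U \<subseteq> K"
    using oU cK by blast
qed

theorem corollary5p11:
  fixes X :: "'a topology"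
  assumes "Hausdorff_space X"
  shows "locally_compact_space X \<longleftrightarrow>
         continuous_poset (sym_pg_le X) (sym_pseudogroup X)"
  using forward[OF assms] backward[OF assms] unfolding continuous_poset_def by blast

end
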